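(* Let $M$ be an $\mathbf{FB}$-module and $a:\mathbf V\otimes M\to\mathbf V\otimes M$ a map of $\mathbf{FB}$-modules, and write $$a(t^j\otimes x)=t^j\otimes\omega^{S\setminus\{j\}}(x)+\sum_{i\in S\setminus\{j\}}t^i\otimes\alpha^S_{i,j}(x)\qquad(j\in S,\ x\in M(S\setminus\{j\})),$$ where $\omega^T$ is an endomorphism of $M(T)$ and $\alpha^S_{i,j}:M(S\setminus\{j\})\to M(S\setminus\{i\})$. Then $(M,a)$ is a representation of $\underline{\mathfrak{gl}}(\mathbf V)$ if and only if: (a) the operations $\alpha$ and $\omega$ commute with themselves and with each other; and (b) for every finite set $S$ and distinct $i,j,k\in S$, $\alpha^{S\setminus\{i\}}_{j,k}\circ\alpha^{S\setminus\{k\}}_{i,j}=\alpha^{S\setminus\{j\}}_{i,k}$.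
   Context: $k$ is a commutative ring; an $\mathbf{FB}$-module is a functor from finite sets and bijections to $k$-modules; $(M\otimes N)(S)=\bigoplus_{T\subseteq S}M(T)\otimes N(S\setminus T)$ (symmetric monoidal). $\mathbf V$ is $k$ on one-element sets and $0$ otherwise, with basis $t^i$ of $\mathbf V(\{i\})$, so $(\mathbf V\otimes M)(S)=\bigoplus_{j\in S}t^j\otimes M(S\setminus\{j\})$. A representation of $\underline{\mathfrak{gl}}(\mathbf V)$ is a pair $(M,a)$ with $a:\mathbf V\otimes M\to\mathbf V\otimes M$ such that $a_1a_2-a_2a_1=\tau(a_1-a_2)$ on $\mathbf V\otimes\mathbf V\otimes M$, where $\tau$ is the symmetry of the first two factors, $a_2=\mathrm{id}_{\mathbf V}\otimes a$, $a_1=\tau a_2\tau$. Operations: here $\alpha$ is regarded as the (natural in bijections) family $\alpha^S_{A,B}:M(S\setminus B)\to M(S\setminus A)$ indexed by disjoint one-element subsets $A=\{i\},B=\{j\}$, and $\omega$ as the family $\omega^S_{\emptyset,\emptyset}=\omega^S$. Two such families $\phi,\psi$ commute if for every finite set $S$ and pairwise disjoint subsets $A,B,C,D\subseteq S$ for which the maps are defined, $\psi^{S\setminus A}_{C,D}\circ\phi^{S\setminus D}_{A,B}=\phi^{S\setminus C}_{A,B}\circ\psi^{S\setminus B}_{C,D}$ as maps $M(S\setminus(B\cup D))\to M(S\setminus(A\cup C))$; a family commutes with itself if this holds with $\psi=\phi$. *)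

theory Defs
  imports Complex_Main
begin

text \<open>Labels are drawn from a type 'a (assumed infinite in the theorem); finite sets S of
labels are the objects of FB.  All k-modules M(S) are realised as submodules of one ambient
k-module 'm (scalar multiplication scale), and the action of a bijection
sigma : S -> sigma ` S is act sigma S : M(S) -> M(sigma ` S).\<close>

definition FB_module ::
  "('k::comm_ring_1 \<Rightarrow> 'm::ab_group_add \<Rightarrow> 'm) \<Rightarrow> ('a set \<Rightarrow> 'm set)
   \<Rightarrow> (('a \<Rightarrow> 'a) \<Rightarrow> 'a set \<Rightarrow> 'm \<Rightarrow> 'm) \<Rightarrow> bool" where
  "FB_module scale M act \<longleftrightarrow>
     module scale \<and>
     (\<forall>S. finite S \<longrightarrow> module.subspace scale (M S)) \<and>
     (\<forall>\<sigma> S. finite S \<longrightarrow> inj_on \<sigma> S \<longrightarrow>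
        (\<forall>x\<in>M S. act \<sigma> S x \<in> M (\<sigma> ` S)) \<and>
        (\<forall>x\<in>M S. \<forall>y\<in>M S. act \<sigma> S (x + y) = act \<sigma> S x + act \<sigma> S y) \<and>
        (\<forall>c. \<forall>x\<in>M S. act \<sigma> S (scale c x) = scale c (act \<sigma> S x))) \<and>
     (\<forall>S x. finite S \<longrightarrow> x \<in> M S \<longrightarrow> act id S x = x) \<and>
     (\<forall>\<sigma> \<tau> S x. finite S \<longrightarrow> inj_on \<sigma> S \<longrightarrow> inj_on \<tau> (\<sigma> ` S) \<longrightarrow> x \<in> M S \<longrightarrow>
        act \<tau> (\<sigma> ` S) (act \<sigma> S x) = act (\<tau> \<circ> \<sigma>) S x) \<and>
     (\<forall>\<sigma> \<sigma>' S x. finite S \<longrightarrow> (\<forall>s\<in>S. \<sigma> s = \<sigma>' s) \<longrightarrow> x \<in> M S \<longrightarrow>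
        act \<sigma> S x = act \<sigma>' S x)"

text \<open>(V (x) M)(S) = direct sum over j in S of t^j (x) M(S - {j}); an element is the
function j |-> its t^j-component (zero outside S).\<close>
definition VM :: "('a set \<Rightarrow> 'm::zero set) \<Rightarrow> 'a set \<Rightarrow> ('a \<Rightarrow> 'm) set" where
  "VM M S = {f. (\<forall>j\<in>S. f j \<in> M (S - {j})) \<and> (\<forall>j. j \<notin> S \<longrightarrow> f j = 0)}"

definition tVM :: "'a \<Rightarrow> 'm::zero \<Rightarrow> 'a \<Rightarrow> 'm" where
  "tVM j x = (\<lambda>i. if i = j then x else 0)"

text \<open>(V (x) V (x) M)(S) = direct sum over distinct i, j in S of t^i (x) t^j (x) M(S - {i,j}).\<close>
definition VVM :: "('a set \<Rightarrow> 'm::zero set) \<Rightarrow> 'a set \<Rightarrow> ('a \<Rightarrow> 'a \<Rightarrow> 'm) set" where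
  "VVM M S = {g. (\<forall>i\<in>S. \<forall>j\<in>S. i \<noteq> j \<longrightarrow> g i j \<in> M (S - {i, j})) \<and>
                 (\<forall>i j. i \<notin> S \<or> j \<notin> S \<or> i = j \<longrightarrow> g i j = 0)}"

text \<open>Action of a bijection sigma : S -> sigma ` S on (V (x) M)(S):
t^j (x) x |-> t^(sigma j) (x) M(sigma restricted to S - {j}) x.\<close>
definition act_VM ::
  "(('a \<Rightarrow> 'a) \<Rightarrow> 'a set \<Rightarrow> 'm \<Rightarrow> 'm) \<Rightarrow> ('a \<Rightarrow> 'a) \<Rightarrow> 'a set \<Rightarrow> ('a \<Rightarrow> 'm) \<Rightarrow> 'a \<Rightarrow> 'm::zero" where
  "act_VM act \<sigma> S f = (\<lambda>i. if i \<in> \<sigma> ` S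
      then act \<sigma> (S - {the_inv_into S \<sigma> i}) (f (the_inv_into S \<sigma> i)) else 0)"

definition FB_map_VM ::
  "('k::comm_ring_1 \<Rightarrow> 'm::ab_group_add \<Rightarrow> 'm) \<Rightarrow> ('a set \<Rightarrow> 'm set)
   \<Rightarrow> (('a \<Rightarrow> 'a) \<Rightarrow> 'a set \<Rightarrow> 'm \<Rightarrow> 'm) \<Rightarrow> ('a set \<Rightarrow> ('a \<Rightarrow> 'm) \<Rightarrow> ('a \<Rightarrow> 'm)) \<Rightarrow> bool" where
  "FB_map_VM scale M act a \<longleftrightarrow>
     (\<forall>S. finite S \<longrightarrow>
        (\<forall>f\<in>VM M S. a S f \<in> VM M S) \<and>
        (\<forall>f\<in>VM M S. \<forall>g\<in>VM M S. a S (\<lambda>i. f i + g i) = (\<lambda>i. a S f i + a S g i)) \<and>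
        (\<forall>c. \<forall>f\<in>VM M S. a S (\<lambda>i. scale c (f i)) = (\<lambda>i. scale c (a S f i))) \<and>
        (\<forall>\<sigma>. inj_on \<sigma> S \<longrightarrow> (\<forall>f\<in>VM M S.
            a (\<sigma> ` S) (act_VM act \<sigma> S f) = act_VM act \<sigma> S (a S f))))"

text \<open>a_2 = id_V (x) a on (V (x) V (x) M)(S), and the symmetry tau of the first two factors.\<close>
definition gl_a2 :: "('a set \<Rightarrow> ('a \<Rightarrow> 'm) \<Rightarrow> ('a \<Rightarrow> 'm)) \<Rightarrow> 'a set
    \<Rightarrow> ('a \<Rightarrow> 'a \<Rightarrow> 'm::zero) \<Rightarrow> 'a \<Rightarrow> 'a \<Rightarrow> 'm" where
  "gl_a2 a S g = (\<lambda>i. if i \<in> S then a (S - {i}) (g i) else (\<lambda>j. 0))"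

definition gl_tau :: "('a \<Rightarrow> 'a \<Rightarrow> 'm) \<Rightarrow> 'a \<Rightarrow> 'a \<Rightarrow> 'm" where
  "gl_tau g = (\<lambda>i j. g j i)"

definition gl_a1 :: "('a set \<Rightarrow> ('a \<Rightarrow> 'm) \<Rightarrow> ('a \<Rightarrow> 'm)) \<Rightarrow> 'a set
    \<Rightarrow> ('a \<Rightarrow> 'a \<Rightarrow> 'm::zero) \<Rightarrow> 'a \<Rightarrow> 'a \<Rightarrow> 'm" where
  "gl_a1 a S g = gl_tau (gl_a2 a S (gl_tau g))"

definition gl_rep :: "('a set \<Rightarrow> 'm::ab_group_add set) \<Rightarrow> ('a set \<Rightarrow> ('a \<Rightarrow> 'm) \<Rightarrow> ('a \<Rightarrow> 'm)) \<Rightarrow> bool" where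
  "gl_rep M a \<longleftrightarrow>
     (\<forall>S. finite S \<longrightarrow> (\<forall>g\<in>VVM M S.
        (\<lambda>i j. gl_a1 a S (gl_a2 a S g) i j - gl_a2 a S (gl_a1 a S g) i j)
        = gl_tau (\<lambda>i j. gl_a1 a S g i j - gl_a2 a S g i j)))"

text \<open>Operations: families phi S A B : M(S - B) -> M(S - A), defined for (A,B) in dom.\<close>
definition ops_commute ::
  "('a set \<Rightarrow> 'm set) \<Rightarrow> ('a set \<Rightarrow> 'a set \<Rightarrow> 'a set \<Rightarrow> 'm \<Rightarrow> 'm) \<Rightarrow> ('a set \<Rightarrow> 'a set \<Rightarrow> bool)
   \<Rightarrow> ('a set \<Rightarrow> 'a set \<Rightarrow> 'a set \<Rightarrow> 'm \<Rightarrow> 'm) \<Rightarrow> ('a set \<Rightarrow> 'a set \<Rightarrow> bool) \<Rightarrow> bool" where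
  "ops_commute M \<phi> dom\<phi> \<psi> dom\<psi> \<longleftrightarrow>
     (\<forall>S A B C D. finite S \<longrightarrow> A \<subseteq> S \<longrightarrow> B \<subseteq> S \<longrightarrow> C \<subseteq> S \<longrightarrow> D \<subseteq> S \<longrightarrow>
        A \<inter> B = {} \<longrightarrow> A \<inter> C = {} \<longrightarrow> A \<inter> D = {} \<longrightarrow>
        B \<inter> C = {} \<longrightarrow> B \<inter> D = {} \<longrightarrow> C \<inter> D = {} \<longrightarrow>
        dom\<phi> A B \<longrightarrow> dom\<psi> C D \<longrightarrow>
        (\<forall>x\<in>M (S - (B \<union> D)).
           \<psi> (S - A) C D (\<phi> (S - D) A B x) = \<phi> (S - C) A B (\<psi> (S - B) C D x)))"

definition alpha_op :: "('a set \<Rightarrow> 'a \<Rightarrow> 'a \<Rightarrow> 'm \<Rightarrow> 'm) \<Rightarrow> 'a set \<Rightarrow> 'a set \<Rightarrow> 'a set \<Rightarrow> 'm \<Rightarrow> 'm" where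
  "alpha_op \<alpha> = (\<lambda>S A B. \<alpha> S (the_elem A) (the_elem B))"

definition alpha_dom :: "'a set \<Rightarrow> 'a set \<Rightarrow> bool" where
  "alpha_dom A B \<longleftrightarrow> (\<exists>i j. A = {i} \<and> B = {j} \<and> i \<noteq> j)"

definition omega_op :: "('a set \<Rightarrow> 'm \<Rightarrow> 'm) \<Rightarrow> 'a set \<Rightarrow> 'a set \<Rightarrow> 'a set \<Rightarrow> 'm \<Rightarrow> 'm" where
  "omega_op \<omega> = (\<lambda>S A B. \<omega> S)"

definition omega_dom :: "'a set \<Rightarrow> 'a set \<Rightarrow> bool" where
  "omega_dom A B \<longleftrightarrow> A = {} \<and> B = {}"

end

theory Submission imports Defs "HOL-Library.Function_Algebras" begin

lemma sum_fun_apply: "(sum f A) x = sum (\<lambda>a. f a x) A"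
  by (induction A rule: infinite_finite_induct) auto

lemma Diff2[simp]: "S - {a} - {b} = S - {a, b}" by auto

locale P46 =
  fixes scale :: "'k::comm_ring_1 \<Rightarrow> 'm::ab_group_add \<Rightarrow> 'm"
    and M :: "'a set \<Rightarrow> 'm set"
    and act :: "('a \<Rightarrow> 'a) \<Rightarrow> 'a set \<Rightarrow> 'm \<Rightarrow> 'm"
    and a :: "'a set \<Rightarrow> ('a \<Rightarrow> 'm) \<Rightarrow> ('a \<Rightarrow> 'm)"
    and \<omega> :: "'a set \<Rightarrow> 'm \<Rightarrow> 'm"
    and \<alpha> :: "'a set \<Rightarrow> 'a \<Rightarrow> 'a \<Rightarrow> 'm \<Rightarrow> 'm"
  assumes inf: "infinite (UNIV :: 'a set)"
    and FB: "FB_module scale M act"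
    and FBm: "FB_map_VM scale M act a"
    and aT: "\<forall>S j x. finite S \<longrightarrow> j \<in> S \<longrightarrow> x \<in> M (S - {j}) \<longrightarrow>
           a S (tVM j x) =
             (\<lambda>i. if i = j then \<omega> (S - {j}) x else if i \<in> S then \<alpha> S i j x else 0)"
begin

lemma modl: "module scale" using FB[unfolded FB_module_def] by (rule conjunct1)

lemma subsp: "finite S \<Longrightarrow> module.subspace scale (M S)"
  by (rule FB[unfolded FB_module_def, THEN conjunct2, THEN conjunct1, rule_format])

lemma zero_in[simp]: "finite S \<Longrightarrow> 0 \<in> M S"
  by (rule module.subspace_0[OF modl subsp])

lemma add_in[simp]: "finite S \<Longrightarrow> x \<in> M S \<Longrightarrow> y \<in> M S \<Longrightarrow> x + y \<in> M S"
  by (rule module.subspace_add[OF modl subsp])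

lemma diff_in[simp]: "finite S \<Longrightarrow> x \<in> M S \<Longrightarrow> y \<in> M S \<Longrightarrow> x - y \<in> M S"
  by (rule module.subspace_diff[OF modl subsp])

lemma sum_in[simp]: "finite S \<Longrightarrow> (\<And>x. x \<in> B \<Longrightarrow> f x \<in> M S) \<Longrightarrow> sum f B \<in> M S"
  by (rule module.subspace_sum[OF modl subsp])

lemma a_VM: "finite S \<Longrightarrow> f \<in> VM M S \<Longrightarrow> a S f \<in> VM M S"
  by (rule FBm[unfolded FB_map_VM_def, rule_format, THEN conjunct1, rule_format])

lemma a_add0: "finite S \<Longrightarrow> f \<in> VM M S \<Longrightarrow> g \<in> VM M S \<Longrightarrow> a S (\<lambda>i. f i + g i) = (\<lambda>i. a S f i + a S g i)"
  by (rule FBm[unfolded FB_map_VM_def, rule_format, THEN conjunct2, THEN conjunct1, rule_format])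

lemma a_add: assumes "finite S" "f \<in> VM M S" "g \<in> VM M S" shows "a S (f + g) = a S f + a S g"
proof -
  have "a S (\<lambda>i. f i + g i) = (\<lambda>i. a S f i + a S g i)" by (rule a_add0[OF assms])
  thus ?thesis unfolding plus_fun_def .
qed

lemma aT': "finite S \<Longrightarrow> j \<in> S \<Longrightarrow> x \<in> M (S - {j}) \<Longrightarrow>
           a S (tVM j x) =
             (\<lambda>i. if i = j then \<omega> (S - {j}) x else if i \<in> S then \<alpha> S i j x else 0)"
  using aT by blast

lemma VM0: "finite S \<Longrightarrow> 0 \<in> VM M S" by (auto simp: VM_def)

lemma tVM_in: "finite S \<Longrightarrow> j \<in> S \<Longrightarrow> x \<in> M (S - {j}) \<Longrightarrow> tVM j x \<in> VM M S"
  by (auto simp: VM_def tVM_def)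

lemma VM_add: "f \<in> VM M S \<Longrightarrow> g \<in> VM M S \<Longrightarrow> finite S \<Longrightarrow> f + g \<in> VM M S"
  by (auto simp: VM_def)

lemma a0: "finite S \<Longrightarrow> a S 0 = 0"
proof -
  assume S: "finite S"
  have "a S (0 + 0) = a S 0 + a S 0" using a_add[OF S VM0[OF S] VM0[OF S]] .
  thus ?thesis by simp
qed

lemma a_sum: "finite S \<Longrightarrow> T \<subseteq> S \<Longrightarrow> (\<And>j. j \<in> T \<Longrightarrow> h j \<in> VM M S) \<Longrightarrow>
   (sum h T \<in> VM M S) \<and> a S (sum h T) = (\<Sum>j\<in>T. a S (h j))"
proof (induction T rule: infinite_finite_induct)
  case (infinite A)
  then show ?case using finite_subset by meson
next
  case empty
  then show ?case using VM0 a0 by (simp add: zero_fun_def[symmetric])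
next
  case (insert x F)
  have S: "finite S" using insert by simp
  have hx: "h x \<in> VM M S" using insert by blast
  have IH: "sum h F \<in> VM M S" "a S (sum h F) = (\<Sum>j\<in>F. a S (h j))" using insert by auto
  have eq: "sum h (insert x F) = h x + sum h F" by (rule sum.insert[OF insert(1,2)])
  have eq2: "(\<Sum>j\<in>insert x F. a S (h j)) = a S (h x) + (\<Sum>j\<in>F. a S (h j))" by (rule sum.insert[OF insert(1,2)])
  show ?case unfolding eq eq2
  proof (rule conjI)
    show "h x + sum h F \<in> VM M S" by (rule VM_add[OF hx IH(1) S])
    show "a S (h x + sum h F) = a S (h x) + (\<Sum>j\<in>F. a S (h j))"
      by (simp only: a_add[OF S hx IH(1)] IH(2))
  qed
qed

lemma f_sum: "f \<in> VM M S \<Longrightarrow> finite S \<Longrightarrow> f = (\<Sum>j\<in>S. tVM j (f j))"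
proof (rule ext)
  fix i assume f: "f \<in> VM M S" and S: "finite S"
  have "(\<Sum>j\<in>S. tVM j (f j)) i = (\<Sum>j\<in>S. if i = j then f j else 0)"
    by (simp add: sum_fun_apply tVM_def)
  also have "\<dots> = f i" using f S by (auto simp: VM_def)
  finally show "f i = (\<Sum>j\<in>S. tVM j (f j)) i" by simp
qed

lemma aform: "finite S \<Longrightarrow> f \<in> VM M S \<Longrightarrow>
  a S f = (\<lambda>i. if i \<in> S then \<omega> (S - {i}) (f i) + (\<Sum>j\<in>S - {i}. \<alpha> S i j (f j)) else 0)"
proof (rule ext)
  fix i assume S: "finite S" and f: "f \<in> VM M S"
  have fj: "j \<in> S \<Longrightarrow> f j \<in> M (S - {j})" for j using f by (auto simp: VM_def)
  have e: "a S (\<Sum>j\<in>S. tVM j (f j)) = (\<Sum>j\<in>S. a S (tVM j (f j)))"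
    by (rule conjunct2[OF a_sum[OF S order_refl]]) (simp add: tVM_in[OF S] fj)
  have "a S f = a S (\<Sum>j\<in>S. tVM j (f j))" using f_sum[OF f S] by (rule arg_cong)
  hence "a S f i = (\<Sum>j\<in>S. a S (tVM j (f j)) i)" using e by (simp add: sum_fun_apply)
  also have "\<dots> = (\<Sum>j\<in>S. (if i = j then \<omega> (S - {j}) (f j) else if i \<in> S then \<alpha> S i j (f j) else 0))"
    by (rule sum.cong) (simp_all add: aT'[OF S _ fj])
  also have "\<dots> = (if i \<in> S then \<omega> (S - {i}) (f i) + (\<Sum>j\<in>S - {i}. \<alpha> S i j (f j)) else 0)"
  proof (cases "i \<in> S")
    case True
    have "(\<Sum>j\<in>S-{i}. if i = j then \<omega> (S - {j}) (f j) else if i \<in> S then \<alpha> S i j (f j) else 0) = (\<Sum>j\<in>S-{i}. \<alpha> S i j (f j))"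
      using True by (intro sum.cong) auto
    then show ?thesis using S True by (simp add: sum.remove[OF S True])
  next
    case False
    then show ?thesis by (auto intro!: sum.neutral)
  qed
  finally show "a S f i = (if i \<in> S then \<omega> (S - {i}) (f i) + (\<Sum>j\<in>S - {i}. \<alpha> S i j (f j)) else 0)" .
qed


lemma fresh: "finite (T::'a set) \<Longrightarrow> \<exists>j. j \<notin> T" by (rule ex_new_if_finite[OF inf])

lemma comp_j: "finite S \<Longrightarrow> j \<in> S \<Longrightarrow> x \<in> M (S - {j}) \<Longrightarrow> \<omega> (S - {j}) x = a S (tVM j x) j"
  using aT'[of S j x] by simp

lemma comp_i: "finite S \<Longrightarrow> j \<in> S \<Longrightarrow> i \<in> S \<Longrightarrow> i \<noteq> j \<Longrightarrow> x \<in> M (S - {j}) \<Longrightarrow> \<alpha> S i j x = a S (tVM j x) i"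
  using aT'[of S j x] by simp

lemma VM_comp: "f \<in> VM M S \<Longrightarrow> i \<in> S \<Longrightarrow> f i \<in> M (S - {i})" by (simp add: VM_def)

lemma om_in0: assumes S: "finite S" and j: "j \<in> S" and x: "x \<in> M (S - {j})" shows "\<omega> (S - {j}) x \<in> M (S - {j})"
  unfolding comp_j[OF S j x] by (rule VM_comp[OF a_VM[OF S tVM_in[OF S j x]] j])

lemma al_in0: assumes S: "finite S" and j: "j \<in> S" and i: "i \<in> S" and ij: "i \<noteq> j" and x: "x \<in> M (S - {j})" shows "\<alpha> S i j x \<in> M (S - {i})"
  unfolding comp_i[OF S j i ij x] by (rule VM_comp[OF a_VM[OF S tVM_in[OF S j x]] i])

lemma tVM_add: "tVM j (x + y) = tVM j x + tVM j (y::'m)" by (rule ext) (simp add: tVM_def)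

lemma a_tadd: assumes S: "finite S" and j: "j \<in> S" and x: "x \<in> M (S - {j})" and y: "y \<in> M (S - {j})" shows
   "a S (tVM j (x + y)) = a S (tVM j x) + a S (tVM j y)"
  unfolding tVM_add by (rule a_add[OF S tVM_in[OF S j x] tVM_in[OF S j y]])

lemma om_add0: "finite S \<Longrightarrow> j \<in> S \<Longrightarrow> x \<in> M (S - {j}) \<Longrightarrow> y \<in> M (S - {j}) \<Longrightarrow>
   \<omega> (S - {j}) (x + y) = \<omega> (S - {j}) x + \<omega> (S - {j}) y"
  using comp_j[of S j] a_tadd[of S j x y] by simp

lemma al_add: "finite S \<Longrightarrow> j \<in> S \<Longrightarrow> i \<in> S \<Longrightarrow> i \<noteq> j \<Longrightarrow> x \<in> M (S - {j}) \<Longrightarrow> y \<in> M (S - {j}) \<Longrightarrow>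
   \<alpha> S i j (x + y) = \<alpha> S i j x + \<alpha> S i j y"
  using comp_i[of S j i] a_tadd[of S j x y] by simp

lemma fresh_S: assumes "finite (T::'a set)" obtains S j where "finite S" "j \<in> S" "T = S - {j}"
proof -
  obtain j where j: "j \<notin> T" using fresh[OF assms] by blast
  show ?thesis by (rule that[of "insert j T" j]) (use assms j in auto)
qed

lemma om_in: assumes "finite T" "x \<in> M T" shows "\<omega> T x \<in> M T"
proof -
  obtain S j where "finite S" "j \<in> S" "T = S - {j}" using fresh_S[OF assms(1)] by blast
  thus ?thesis using om_in0 assms(2) by simp
qed

lemma om_add: assumes "finite T" "x \<in> M T" "y \<in> M T" shows "\<omega> T (x + y) = \<omega> T x + \<omega> T y"
proof -
  obtain S j where "finite S" "j \<in> S" "T = S - {j}" using fresh_S[OF assms(1)] by blast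
  thus ?thesis using om_add0 assms(2,3) by simp
qed

lemma om0: "finite T \<Longrightarrow> \<omega> T 0 = 0"
  using om_add[of T 0 0] by simp

lemma al0: "finite S \<Longrightarrow> j \<in> S \<Longrightarrow> i \<in> S \<Longrightarrow> i \<noteq> j \<Longrightarrow> \<alpha> S i j 0 = 0"
  using al_add[of S j i 0 0] by simp

lemma al0': "finite S \<Longrightarrow> j \<in> S \<Longrightarrow> i \<in> S \<Longrightarrow> j \<noteq> i \<Longrightarrow> \<alpha> S i j 0 = 0"
  using al0 by metis

lemma om_sum: "finite T \<Longrightarrow> (\<And>k. k \<in> K \<Longrightarrow> h k \<in> M T) \<Longrightarrow> \<omega> T (sum h K) = (\<Sum>k\<in>K. \<omega> T (h k))"
proof (induction K rule: infinite_finite_induct)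
  case (insert x F)
  have "\<omega> T (sum h (insert x F)) = \<omega> T (h x + sum h F)" by (simp add: insert(1,2))
  also have "\<dots> = \<omega> T (h x) + \<omega> T (sum h F)" using insert by (intro om_add) auto
  finally show ?case using insert by simp
qed (simp_all add: om0)

lemma al_sum: "finite S \<Longrightarrow> j \<in> S \<Longrightarrow> i \<in> S \<Longrightarrow> i \<noteq> j \<Longrightarrow> (\<And>k. k \<in> K \<Longrightarrow> h k \<in> M (S - {j})) \<Longrightarrow>
   \<alpha> S i j (sum h K) = (\<Sum>k\<in>K. \<alpha> S i j (h k))"
proof (induction K rule: infinite_finite_induct)
  case (insert x F)
  have "\<alpha> S i j (sum h (insert x F)) = \<alpha> S i j (h x + sum h F)" by (simp add: insert(1,2))
  also have "\<dots> = \<alpha> S i j (h x) + \<alpha> S i j (sum h F)" using insert by (intro al_add) auto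
  finally show ?case using insert by simp
qed (simp_all add: al0)


lemma al_in2: "finite S \<Longrightarrow> p \<in> S \<Longrightarrow> j \<in> S \<Longrightarrow> k \<in> S \<Longrightarrow> p \<noteq> j \<Longrightarrow> p \<noteq> k \<Longrightarrow> j \<noteq> k \<Longrightarrow>
   x \<in> M (S - {p, k}) \<Longrightarrow> \<alpha> (S - {p}) j k x \<in> M (S - {p, j})"
  using al_in0[of "S - {p}" k j x] by simp

lemma VVM_comp: "g \<in> VVM M S \<Longrightarrow> i \<in> S \<Longrightarrow> j \<in> S \<Longrightarrow> i \<noteq> j \<Longrightarrow> g i j \<in> M (S - {i, j})"
  by (simp add: VVM_def)

lemma VVM_zero: "g \<in> VVM M S \<Longrightarrow> \<not> (i \<in> S \<and> j \<in> S \<and> i \<noteq> j) \<Longrightarrow> g i j = 0"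
  by (auto simp: VVM_def)

lemma VVM_row: "g \<in> VVM M S \<Longrightarrow> i \<in> S \<Longrightarrow> g i \<in> VM M (S - {i})"
  unfolding VM_def VVM_def by auto

lemma VVM_I: "(\<And>i j. i \<in> S \<Longrightarrow> j \<in> S \<Longrightarrow> i \<noteq> j \<Longrightarrow> g i j \<in> M (S - {i, j})) \<Longrightarrow>
   (\<And>i j. \<not> (i \<in> S \<and> j \<in> S \<and> i \<noteq> j) \<Longrightarrow> g i j = 0) \<Longrightarrow> g \<in> VVM M S"
  unfolding VVM_def by auto

lemma tau_VVM: assumes g: "g \<in> VVM M S" shows "gl_tau g \<in> VVM M S"
proof (rule VVM_I)
  fix i j assume ij: "i \<in> S" "j \<in> S" "i \<noteq> j"
  have "g j i \<in> M (S - {j, i})" using VVM_comp[OF g] ij by simp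
  moreover have "{j, i} = {i, j}" by auto
  ultimately show "gl_tau g i j \<in> M (S - {i, j})" by (simp add: gl_tau_def)
next
  fix i j assume "\<not> (i \<in> S \<and> j \<in> S \<and> i \<noteq> j)"
  then show "gl_tau g i j = 0" using VVM_zero[OF g, of j i] by (auto simp: gl_tau_def)
qed

lemma a2_form: assumes S: "finite S" and g: "g \<in> VVM M S"
  shows "gl_a2 a S g i j = (if i \<in> S \<and> j \<in> S \<and> i \<noteq> j then \<omega> (S - {i, j}) (g i j) +
            (\<Sum>k\<in>S - {i, j}. \<alpha> (S - {i}) j k (g i k)) else 0)"
proof (cases "i \<in> S")
  case True
  have "gl_a2 a S g i j = a (S - {i}) (g i) j" using True by (simp add: gl_a2_def)
  also have "\<dots> = (if j \<in> S - {i} then \<omega> (S - {i} - {j}) (g i j) + (\<Sum>k\<in>S - {i} - {j}. \<alpha> (S - {i}) j k (g i k)) else 0)"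
    using aform[of "S - {i}" "g i"] VVM_row[OF g True] S by (simp only: finite_Diff)
  finally show ?thesis using True by auto
next
  case False
  then show ?thesis by (simp add: gl_a2_def)
qed

lemma a1_form: assumes S: "finite S" and g: "g \<in> VVM M S"
  shows "gl_a1 a S g i j = (if i \<in> S \<and> j \<in> S \<and> i \<noteq> j then \<omega> (S - {i, j}) (g i j) +
            (\<Sum>k\<in>S - {i, j}. \<alpha> (S - {j}) i k (g k j)) else 0)"
proof -
  have "gl_a1 a S g i j = gl_a2 a S (gl_tau g) j i" by (simp add: gl_a1_def gl_tau_def)
  also have "\<dots> = (if j \<in> S \<and> i \<in> S \<and> j \<noteq> i then \<omega> (S - {j, i}) (gl_tau g j i) +
            (\<Sum>k\<in>S - {j, i}. \<alpha> (S - {j}) i k (gl_tau g j k)) else 0)"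
    by (rule a2_form[OF S tau_VVM[OF g]])
  finally show ?thesis by (auto simp: gl_tau_def insert_commute)
qed

lemma a2_in: assumes S: "finite S" and g: "g \<in> VVM M S" shows "gl_a2 a S g \<in> VVM M S"
proof (rule VVM_I)
  fix i j assume ij: "i \<in> S" "j \<in> S" "i \<noteq> j"
  show "gl_a2 a S g i j \<in> M (S - {i, j})"
    unfolding a2_form[OF S g] using ij S
    by (auto intro!: add_in om_in sum_in al_in2 VVM_comp[OF g])
next
  fix i j assume "\<not> (i \<in> S \<and> j \<in> S \<and> i \<noteq> j)"
  then show "gl_a2 a S g i j = 0" unfolding a2_form[OF S g] by (rule if_not_P)
qed

lemma a1_in: assumes S: "finite S" and g: "g \<in> VVM M S" shows "gl_a1 a S g \<in> VVM M S"
  unfolding gl_a1_def by (rule tau_VVM[OF a2_in[OF S tau_VVM[OF g]]])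


lemma al_inT: "finite S \<Longrightarrow> p \<in> S \<Longrightarrow> i \<in> S \<Longrightarrow> l \<in> S \<Longrightarrow> p \<noteq> i \<Longrightarrow> p \<noteq> l \<Longrightarrow> i \<noteq> l \<Longrightarrow>
   x \<in> M (S - {p, l}) \<Longrightarrow> T = S - {p, i} \<Longrightarrow> \<alpha> (S - {p}) i l x \<in> M T"
  using al_in2[of S p i l x] by simp

lemma om_inT: "finite T \<Longrightarrow> x \<in> M T \<Longrightarrow> T' = T \<Longrightarrow> \<omega> T x \<in> M T'"
  using om_in by simp

lemma L1: assumes S: "finite S" and g: "g \<in> VVM M S" and ij: "i \<in> S" "j \<in> S" "i \<noteq> j"
  shows "gl_a1 a S (gl_a2 a S g) i j =
     \<omega> (S - {i, j}) (\<omega> (S - {i, j}) (g i j))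
   + (\<Sum>k\<in>S - {i, j}. \<omega> (S - {i, j}) (\<alpha> (S - {i}) j k (g i k)))
   + (\<Sum>l\<in>S - {i, j}. \<alpha> (S - {j}) i l (\<omega> (S - {l, j}) (g l j)))
   + (\<Sum>l\<in>S - {i, j}. \<Sum>k\<in>S - {l, j}. \<alpha> (S - {j}) i l (\<alpha> (S - {l}) j k (g l k)))"
proof -
  let ?h = "gl_a2 a S g"
  have h: "?h \<in> VVM M S" by (rule a2_in[OF S g])
  have gm: "\<And>p q T. p \<in> S \<Longrightarrow> q \<in> S \<Longrightarrow> p \<noteq> q \<Longrightarrow> T = S - {p, q} \<Longrightarrow> g p q \<in> M T"
    using VVM_comp[OF g] by simp
  have e1: "gl_a1 a S ?h i j = \<omega> (S - {i, j}) (?h i j) + (\<Sum>l\<in>S - {i, j}. \<alpha> (S - {j}) i l (?h l j))"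
    using a1_form[OF S h] ij by simp
  have e2: "?h i j = \<omega> (S - {i, j}) (g i j) + (\<Sum>k\<in>S - {i, j}. \<alpha> (S - {i}) j k (g i k))"
    using a2_form[OF S g] ij by simp
  have m: "\<And>k. k \<in> S - {i, j} \<Longrightarrow> \<alpha> (S - {i}) j k (g i k) \<in> M (S - {i, j})"
    using S ij by (auto intro!: al_inT gm)
  have A: "\<omega> (S - {i, j}) (?h i j) = \<omega> (S - {i, j}) (\<omega> (S - {i, j}) (g i j))
       + (\<Sum>k\<in>S - {i, j}. \<omega> (S - {i, j}) (\<alpha> (S - {i}) j k (g i k)))"
  proof -
    have "\<omega> (S - {i, j}) (?h i j) = \<omega> (S - {i, j}) (\<omega> (S - {i, j}) (g i j))
       + \<omega> (S - {i, j}) (\<Sum>k\<in>S - {i, j}. \<alpha> (S - {i}) j k (g i k))"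
      unfolding e2 using S ij m by (intro om_add om_in sum_in gm) auto
    also have "\<omega> (S - {i, j}) (\<Sum>k\<in>S - {i, j}. \<alpha> (S - {i}) j k (g i k))
       = (\<Sum>k\<in>S - {i, j}. \<omega> (S - {i, j}) (\<alpha> (S - {i}) j k (g i k)))"
      using S m by (intro om_sum) auto
    finally show ?thesis .
  qed
  have B: "\<alpha> (S - {j}) i l (?h l j) = \<alpha> (S - {j}) i l (\<omega> (S - {l, j}) (g l j))
       + (\<Sum>k\<in>S - {l, j}. \<alpha> (S - {j}) i l (\<alpha> (S - {l}) j k (g l k)))" if l: "l \<in> S - {i, j}" for l
  proof -
    have e3: "?h l j = \<omega> (S - {l, j}) (g l j) + (\<Sum>k\<in>S - {l, j}. \<alpha> (S - {l}) j k (g l k))"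
      using a2_form[OF S g] l ij by simp
    have m1: "\<omega> (S - {l, j}) (g l j) \<in> M (S - {j} - {l})"
      using S ij l by (auto intro!: om_inT gm)
    have m2: "\<alpha> (S - {l}) j k (g l k) \<in> M (S - {j} - {l})" if k: "k \<in> S - {l, j}" for k
      using S ij l k by (auto intro!: al_inT gm)
    have "\<alpha> (S - {j}) i l (?h l j) = \<alpha> (S - {j}) i l (\<omega> (S - {l, j}) (g l j))
       + \<alpha> (S - {j}) i l (\<Sum>k\<in>S - {l, j}. \<alpha> (S - {l}) j k (g l k))"
      unfolding e3 using S ij l m1 m2 by (intro al_add sum_in) auto
    also have "\<alpha> (S - {j}) i l (\<Sum>k\<in>S - {l, j}. \<alpha> (S - {l}) j k (g l k))
       = (\<Sum>k\<in>S - {l, j}. \<alpha> (S - {j}) i l (\<alpha> (S - {l}) j k (g l k)))"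
      using S ij l m2 by (intro al_sum) auto
    finally show ?thesis .
  qed
  show ?thesis unfolding e1 A using B by (simp add: sum.distrib add.assoc)
qed

lemma L2: assumes S: "finite S" and g: "g \<in> VVM M S" and ij: "i \<in> S" "j \<in> S" "i \<noteq> j"
  shows "gl_a2 a S (gl_a1 a S g) i j =
     \<omega> (S - {i, j}) (\<omega> (S - {i, j}) (g i j))
   + (\<Sum>l\<in>S - {i, j}. \<omega> (S - {i, j}) (\<alpha> (S - {j}) i l (g l j)))
   + (\<Sum>k\<in>S - {i, j}. \<alpha> (S - {i}) j k (\<omega> (S - {i, k}) (g i k)))
   + (\<Sum>k\<in>S - {i, j}. \<Sum>l\<in>S - {i, k}. \<alpha> (S - {i}) j k (\<alpha> (S - {k}) i l (g l k)))"
proof -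
  let ?h = "gl_a1 a S g"
  have h: "?h \<in> VVM M S" by (rule a1_in[OF S g])
  have gm: "\<And>p q T. p \<in> S \<Longrightarrow> q \<in> S \<Longrightarrow> p \<noteq> q \<Longrightarrow> T = S - {p, q} \<Longrightarrow> g p q \<in> M T"
    using VVM_comp[OF g] by simp
  have e1: "gl_a2 a S ?h i j = \<omega> (S - {i, j}) (?h i j) + (\<Sum>k\<in>S - {i, j}. \<alpha> (S - {i}) j k (?h i k))"
    using a2_form[OF S h] ij by simp
  have e2: "?h i j = \<omega> (S - {i, j}) (g i j) + (\<Sum>l\<in>S - {i, j}. \<alpha> (S - {j}) i l (g l j))"
    using a1_form[OF S g] ij by simp
  have m: "\<And>l. l \<in> S - {i, j} \<Longrightarrow> \<alpha> (S - {j}) i l (g l j) \<in> M (S - {i, j})"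
    using S ij by (auto intro!: al_inT gm)
  have A: "\<omega> (S - {i, j}) (?h i j) = \<omega> (S - {i, j}) (\<omega> (S - {i, j}) (g i j))
       + (\<Sum>l\<in>S - {i, j}. \<omega> (S - {i, j}) (\<alpha> (S - {j}) i l (g l j)))"
  proof -
    have "\<omega> (S - {i, j}) (?h i j) = \<omega> (S - {i, j}) (\<omega> (S - {i, j}) (g i j))
       + \<omega> (S - {i, j}) (\<Sum>l\<in>S - {i, j}. \<alpha> (S - {j}) i l (g l j))"
      unfolding e2 using S ij m by (intro om_add om_in sum_in gm) auto
    also have "\<omega> (S - {i, j}) (\<Sum>l\<in>S - {i, j}. \<alpha> (S - {j}) i l (g l j))
       = (\<Sum>l\<in>S - {i, j}. \<omega> (S - {i, j}) (\<alpha> (S - {j}) i l (g l j)))"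
      using S m by (intro om_sum) auto
    finally show ?thesis .
  qed
  have B: "\<alpha> (S - {i}) j k (?h i k) = \<alpha> (S - {i}) j k (\<omega> (S - {i, k}) (g i k))
       + (\<Sum>l\<in>S - {i, k}. \<alpha> (S - {i}) j k (\<alpha> (S - {k}) i l (g l k)))" if k: "k \<in> S - {i, j}" for k
  proof -
    have e3: "?h i k = \<omega> (S - {i, k}) (g i k) + (\<Sum>l\<in>S - {i, k}. \<alpha> (S - {k}) i l (g l k))"
      using a1_form[OF S g, of i k] k ij by auto
    have m1: "\<omega> (S - {i, k}) (g i k) \<in> M (S - {i} - {k})"
      using S ij k by (auto intro!: om_inT gm)
    have m2: "\<alpha> (S - {k}) i l (g l k) \<in> M (S - {i} - {k})" if l: "l \<in> S - {i, k}" for l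
      using S ij l k by (auto intro!: al_inT gm)
    have "\<alpha> (S - {i}) j k (?h i k) = \<alpha> (S - {i}) j k (\<omega> (S - {i, k}) (g i k))
       + \<alpha> (S - {i}) j k (\<Sum>l\<in>S - {i, k}. \<alpha> (S - {k}) i l (g l k))"
      unfolding e3 using S ij k m1 m2 by (intro al_add sum_in) auto
    also have "\<alpha> (S - {i}) j k (\<Sum>l\<in>S - {i, k}. \<alpha> (S - {k}) i l (g l k))
       = (\<Sum>l\<in>S - {i, k}. \<alpha> (S - {i}) j k (\<alpha> (S - {k}) i l (g l k)))"
      using S ij k m2 by (intro al_sum) auto
    finally show ?thesis .
  qed
  show ?thesis unfolding e1 A using B by (simp add: sum.distrib add.assoc)
qed

lemma Rform: assumes S: "finite S" and g: "g \<in> VVM M S" and ij: "i \<in> S" "j \<in> S" "i \<noteq> j"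
  shows "gl_tau (\<lambda>i j. gl_a1 a S g i j - gl_a2 a S g i j) i j =
     (\<Sum>k\<in>S - {i, j}. \<alpha> (S - {i}) j k (g k i)) - (\<Sum>k\<in>S - {i, j}. \<alpha> (S - {j}) i k (g j k))"
proof -
  have eq: "S - {j, i} = S - {i, j}" by auto
  show ?thesis unfolding gl_tau_def a1_form[OF S g] a2_form[OF S g] using ij by (simp add: eq)
qed


lemma offdiag: assumes P: "finite P" and k: "k \<in> P"
  shows "(\<Sum>l\<in>P - {k}. G l) = (\<Sum>l\<in>P. if l = k then 0 else G l)"
proof -
  have "(\<Sum>l\<in>P. if l = k then 0 else G l) = (if k = k then 0 else G k) + (\<Sum>l\<in>P - {k}. if l = k then 0 else G l)"
    by (rule sum.remove[OF P k])
  also have "\<dots> = (\<Sum>l\<in>P - {k}. G l)" by simp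
  finally show ?thesis by simp
qed

lemma offdiag_swap: assumes P: "finite P"
  shows "(\<Sum>k\<in>P. \<Sum>l\<in>P - {k}. G k l) = (\<Sum>l\<in>P. \<Sum>k\<in>P - {l}. (G k l :: 'b::ab_group_add))"
proof -
  have "(\<Sum>k\<in>P. \<Sum>l\<in>P - {k}. G k l) = (\<Sum>k\<in>P. \<Sum>l\<in>P. if l = k then 0 else G k l)"
    by (rule sum.cong) (simp_all add: offdiag[OF P])
  also have "\<dots> = (\<Sum>l\<in>P. \<Sum>k\<in>P. if l = k then 0 else G k l)" by (rule sum.swap)
  also have "\<dots> = (\<Sum>l\<in>P. \<Sum>k\<in>P - {l}. G k l)"
    by (rule sum.cong) (simp_all add: offdiag[OF P] eq_commute)
  finally show ?thesis .
qed

lemma alg: "(w + a1 + a2 + (x1 + x')) - (w + b1 + b2 + (y1 + y')) - (r1 - r2) =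
   (a1 - b2) + (a2 - b1) + (x1 - r1) + (r2 - y1) + (x' - (y'::'b::ab_group_add))"
  by (simp add: algebra_simps)

lemma expand: assumes S: "finite S" and g: "g \<in> VVM M S" and ij: "i \<in> S" "j \<in> S" "i \<noteq> j"
  shows "gl_a1 a S (gl_a2 a S g) i j - gl_a2 a S (gl_a1 a S g) i j
          - gl_tau (\<lambda>i j. gl_a1 a S g i j - gl_a2 a S g i j) i j =
     (\<Sum>k\<in>S - {i, j}. \<omega> (S - {i, j}) (\<alpha> (S - {i}) j k (g i k)) - \<alpha> (S - {i}) j k (\<omega> (S - {i, k}) (g i k)))
   + (\<Sum>l\<in>S - {i, j}. \<alpha> (S - {j}) i l (\<omega> (S - {l, j}) (g l j)) - \<omega> (S - {i, j}) (\<alpha> (S - {j}) i l (g l j)))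
   + (\<Sum>l\<in>S - {i, j}. \<alpha> (S - {j}) i l (\<alpha> (S - {l}) j i (g l i)) - \<alpha> (S - {i}) j l (g l i))
   + (\<Sum>k\<in>S - {i, j}. \<alpha> (S - {j}) i k (g j k) - \<alpha> (S - {i}) j k (\<alpha> (S - {k}) i j (g j k)))
   + (\<Sum>l\<in>S - {i, j}. \<Sum>k\<in>S - {i, j} - {l}. \<alpha> (S - {j}) i l (\<alpha> (S - {l}) j k (g l k)) - \<alpha> (S - {i}) j k (\<alpha> (S - {k}) i l (g l k)))"
proof -
  define P where "P = S - {i, j}"
  have P: "finite P" using S by (simp add: P_def)
  have X: "(\<Sum>l\<in>P. \<Sum>k\<in>S - {l, j}. F l k) = (\<Sum>l\<in>P. F l i) + (\<Sum>l\<in>P. \<Sum>k\<in>P - {l}. F l k)" for F :: "'a \<Rightarrow> 'a \<Rightarrow> 'm"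
  proof -
    have "(\<Sum>k\<in>S - {l, j}. F l k) = F l i + (\<Sum>k\<in>P - {l}. F l k)" if l: "l \<in> P" for l
    proof -
      have "S - {l, j} = insert i (P - {l})" using l ij by (auto simp: P_def)
      moreover have "i \<notin> P - {l}" by (simp add: P_def)
      ultimately show ?thesis using P by simp
    qed
    then show ?thesis by (simp add: sum.distrib)
  qed
  have Y: "(\<Sum>k\<in>P. \<Sum>l\<in>S - {i, k}. G k l) = (\<Sum>k\<in>P. G k j) + (\<Sum>k\<in>P. \<Sum>l\<in>P - {k}. G k l)" for G :: "'a \<Rightarrow> 'a \<Rightarrow> 'm"
  proof -
    have "(\<Sum>l\<in>S - {i, k}. G k l) = G k j + (\<Sum>l\<in>P - {k}. G k l)" if k: "k \<in> P" for k
    proof -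
      have "S - {i, k} = insert j (P - {k})" using k ij by (auto simp: P_def)
      moreover have "j \<notin> P - {k}" by (simp add: P_def)
      ultimately show ?thesis using P by simp
    qed
    then show ?thesis by (simp add: sum.distrib)
  qed
  note sw = offdiag_swap[OF P, of "\<lambda>k l. \<alpha> (S - {i}) j k (\<alpha> (S - {k}) i l (g l k))"]
  show ?thesis
    unfolding L1[OF S g ij] L2[OF S g ij] Rform[OF S g ij] P_def[symmetric] X Y sw sum_subtractf
    by (rule alg)
qed


definition TT where "TT S g i j = ((\<Sum>k\<in>S - {i, j}. \<omega> (S - {i, j}) (\<alpha> (S - {i}) j k (g i k)) - \<alpha> (S - {i}) j k (\<omega> (S - {i, k}) (g i k)))
   + (\<Sum>l\<in>S - {i, j}. \<alpha> (S - {j}) i l (\<omega> (S - {l, j}) (g l j)) - \<omega> (S - {i, j}) (\<alpha> (S - {j}) i l (g l j)))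
   + (\<Sum>l\<in>S - {i, j}. \<alpha> (S - {j}) i l (\<alpha> (S - {l}) j i (g l i)) - \<alpha> (S - {i}) j l (g l i))
   + (\<Sum>k\<in>S - {i, j}. \<alpha> (S - {j}) i k (g j k) - \<alpha> (S - {i}) j k (\<alpha> (S - {k}) i j (g j k)))
   + (\<Sum>l\<in>S - {i, j}. \<Sum>k\<in>S - {i, j} - {l}. \<alpha> (S - {j}) i l (\<alpha> (S - {l}) j k (g l k)) - \<alpha> (S - {i}) j k (\<alpha> (S - {k}) i l (g l k))))"

lemma glrep_iff: "gl_rep M a \<longleftrightarrow> (\<forall>S g i j. finite S \<longrightarrow> g \<in> VVM M S \<longrightarrow> i \<in> S \<longrightarrow> j \<in> S \<longrightarrow> i \<noteq> j \<longrightarrow> TT S g i j = 0)"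
proof -
  have out: "gl_a1 a S (gl_a2 a S g) i j - gl_a2 a S (gl_a1 a S g) i j = gl_tau (\<lambda>i j. gl_a1 a S g i j - gl_a2 a S g i j) i j"
    if S: "finite S" and g: "g \<in> VVM M S" and n: "\<not> (i \<in> S \<and> j \<in> S \<and> i \<noteq> j)" for S g i j
  proof -
    have n': "\<not> (j \<in> S \<and> i \<in> S \<and> j \<noteq> i)" using n by blast
    have z1: "gl_a1 a S (gl_a2 a S g) i j = 0" using a1_form[OF S a2_in[OF S g], of i j] n by simp
    have z2: "gl_a2 a S (gl_a1 a S g) i j = 0" using a2_form[OF S a1_in[OF S g], of i j] n by simp
    have z3: "gl_a1 a S g j i = 0" using a1_form[OF S g, of j i] n' by simp
    have z4: "gl_a2 a S g j i = 0" using a2_form[OF S g, of j i] n' by simp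
    show ?thesis unfolding gl_tau_def z1 z2 z3 z4 by simp
  qed
  have inn: "(gl_a1 a S (gl_a2 a S g) i j - gl_a2 a S (gl_a1 a S g) i j = gl_tau (\<lambda>i j. gl_a1 a S g i j - gl_a2 a S g i j) i j)
     \<longleftrightarrow> TT S g i j = 0"
    if S: "finite S" and g: "g \<in> VVM M S" and ij: "i \<in> S" "j \<in> S" "i \<noteq> j" for S g i j
  proof -
    have e: "gl_a1 a S (gl_a2 a S g) i j - gl_a2 a S (gl_a1 a S g) i j - gl_tau (\<lambda>i j. gl_a1 a S g i j - gl_a2 a S g i j) i j
      = TT S g i j" unfolding TT_def by (rule expand[OF S g ij])
    show ?thesis unfolding e[symmetric] by (rule eq_iff_diff_eq_0)
  qed
  show ?thesis
  proof
    assume r: "gl_rep M a"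
    show "\<forall>S g i j. finite S \<longrightarrow> g \<in> VVM M S \<longrightarrow> i \<in> S \<longrightarrow> j \<in> S \<longrightarrow> i \<noteq> j \<longrightarrow> TT S g i j = 0"
    proof (intro allI impI)
      fix S g i j assume S: "finite S" and g: "g \<in> VVM M S" and ij: "i \<in> S" "j \<in> S" "i \<noteq> j"
      have "(\<lambda>i j. gl_a1 a S (gl_a2 a S g) i j - gl_a2 a S (gl_a1 a S g) i j)
        = gl_tau (\<lambda>i j. gl_a1 a S g i j - gl_a2 a S g i j)" by (rule r[unfolded gl_rep_def, rule_format, OF S g])
      hence "gl_a1 a S (gl_a2 a S g) i j - gl_a2 a S (gl_a1 a S g) i j = gl_tau (\<lambda>i j. gl_a1 a S g i j - gl_a2 a S g i j) i j"
        by (rule fun_cong[OF fun_cong])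
      thus "TT S g i j = 0" by (rule inn[OF S g ij, THEN iffD1])
    qed
  next
    assume h: "\<forall>S g i j. finite S \<longrightarrow> g \<in> VVM M S \<longrightarrow> i \<in> S \<longrightarrow> j \<in> S \<longrightarrow> i \<noteq> j \<longrightarrow> TT S g i j = 0"
    show "gl_rep M a" unfolding gl_rep_def
    proof (intro allI impI ballI ext)
      fix S g i j assume S: "finite S" and g: "g \<in> VVM M S"
      show "gl_a1 a S (gl_a2 a S g) i j - gl_a2 a S (gl_a1 a S g) i j = gl_tau (\<lambda>i j. gl_a1 a S g i j - gl_a2 a S g i j) i j"
      proof (cases "i \<in> S \<and> j \<in> S \<and> i \<noteq> j")
        case True
        then have "TT S g i j = 0" using h[rule_format, OF S g] by blast
        then show ?thesis using True inn[OF S g] by blast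
      next
        case False
        then show ?thesis by (rule out[OF S g])
      qed
    qed
  qed
qed

definition T1 where "T1 S g i j = (\<Sum>k\<in>S - {i, j}. \<omega> (S - {i, j}) (\<alpha> (S - {i}) j k (g i k)) - \<alpha> (S - {i}) j k (\<omega> (S - {i, k}) (g i k)))"

definition T2 where "T2 S g i j = (\<Sum>l\<in>S - {i, j}. \<alpha> (S - {j}) i l (\<omega> (S - {l, j}) (g l j)) - \<omega> (S - {i, j}) (\<alpha> (S - {j}) i l (g l j)))"

definition T3 where "T3 S g i j = (\<Sum>l\<in>S - {i, j}. \<alpha> (S - {j}) i l (\<alpha> (S - {l}) j i (g l i)) - \<alpha> (S - {i}) j l (g l i))"

definition T4 where "T4 S g i j = (\<Sum>k\<in>S - {i, j}. \<alpha> (S - {j}) i k (g j k) - \<alpha> (S - {i}) j k (\<alpha> (S - {k}) i j (g j k)))"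

definition T5 where "T5 S g i j = (\<Sum>l\<in>S - {i, j}. \<Sum>k\<in>S - {i, j} - {l}. \<alpha> (S - {j}) i l (\<alpha> (S - {l}) j k (g l k)) - \<alpha> (S - {i}) j k (\<alpha> (S - {k}) i l (g l k)))"


lemma TT_split: "TT S g i j = T1 S g i j + T2 S g i j + T3 S g i j + T4 S g i j + T5 S g i j"
  unfolding TT_def T1_def T2_def T3_def T4_def T5_def by (rule refl)

lemma sum_single: "finite P \<Longrightarrow> p \<in> P \<Longrightarrow> (\<And>l. l \<in> P \<Longrightarrow> l \<noteq> p \<Longrightarrow> F l = 0) \<Longrightarrow> sum F P = F p"
  by (simp add: sum.remove)

lemma sg_VVM: "finite S \<Longrightarrow> p \<in> S \<Longrightarrow> q \<in> S \<Longrightarrow> p \<noteq> q \<Longrightarrow> x \<in> M (S - {p, q}) \<Longrightarrow>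
   (\<lambda>u v. if u = p \<and> v = q then x else 0) \<in> VVM M S"
  by (rule VVM_I) auto

lemma suff:
  assumes Caa: "\<forall>S a b c d. finite S \<longrightarrow> a \<in> S \<longrightarrow> b \<in> S \<longrightarrow> c \<in> S \<longrightarrow> d \<in> S \<longrightarrow>
       a \<noteq> b \<longrightarrow> a \<noteq> c \<longrightarrow> a \<noteq> d \<longrightarrow> b \<noteq> c \<longrightarrow> b \<noteq> d \<longrightarrow> c \<noteq> d \<longrightarrow>
       (\<forall>x\<in>M (S - {b, d}). \<alpha> (S - {a}) c d (\<alpha> (S - {d}) a b x) = \<alpha> (S - {c}) a b (\<alpha> (S - {b}) c d x))"
  and Caw: "\<forall>S a b. finite S \<longrightarrow> a \<in> S \<longrightarrow> b \<in> S \<longrightarrow> a \<noteq> b \<longrightarrow>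
       (\<forall>x\<in>M (S - {b}). \<omega> (S - {a}) (\<alpha> S a b x) = \<alpha> S a b (\<omega> (S - {b}) x))"
  and Cb: "\<forall>S i j k. finite S \<longrightarrow> i \<in> S \<longrightarrow> j \<in> S \<longrightarrow> k \<in> S \<longrightarrow>
               i \<noteq> j \<longrightarrow> i \<noteq> k \<longrightarrow> j \<noteq> k \<longrightarrow>
               (\<forall>x\<in>M (S - {j, k}).
                  \<alpha> (S - {i}) j k (\<alpha> (S - {k}) i j x) = \<alpha> (S - {j}) i k x)"
  and S: "finite S" and g: "g \<in> VVM M S" and ij: "i \<in> S" "j \<in> S" "i \<noteq> j"
  shows "TT S g i j = 0"
proof -
  have gm: "\<And>p q. p \<in> S \<Longrightarrow> q \<in> S \<Longrightarrow> p \<noteq> q \<Longrightarrow> g p q \<in> M (S - {p, q})" by (rule VVM_comp[OF g])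
  have t1: "T1 S g i j = 0" unfolding T1_def
  proof (rule sum.neutral, rule ballI)
    fix k assume k: "k \<in> S - {i, j}"
    have "\<omega> (S - {i} - {j}) (\<alpha> (S - {i}) j k (g i k)) = \<alpha> (S - {i}) j k (\<omega> (S - {i} - {k}) (g i k))"
      using Caw[rule_format, of "S - {i}" j k "g i k"] S k ij gm[of i k] by auto
    then show "\<omega> (S - {i, j}) (\<alpha> (S - {i}) j k (g i k)) - \<alpha> (S - {i}) j k (\<omega> (S - {i, k}) (g i k)) = 0" by simp
  qed
  have t2: "T2 S g i j = 0" unfolding T2_def
  proof (rule sum.neutral, rule ballI)
    fix l assume l: "l \<in> S - {i, j}"
    have e1: "S - {j, l} = S - {l, j}" and e2: "S - {j, i} = S - {i, j}" by auto
    have "\<omega> (S - {j} - {i}) (\<alpha> (S - {j}) i l (g l j)) = \<alpha> (S - {j}) i l (\<omega> (S - {j} - {l}) (g l j))"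
      using Caw[rule_format, of "S - {j}" i l "g l j"] S l ij gm[of l j] by (auto simp add: e1)
    then show "\<alpha> (S - {j}) i l (\<omega> (S - {l, j}) (g l j)) - \<omega> (S - {i, j}) (\<alpha> (S - {j}) i l (g l j)) = 0"
      by (simp add: e1 e2)
  qed
  have t3: "T3 S g i j = 0" unfolding T3_def
  proof (rule sum.neutral, rule ballI)
    fix l assume l: "l \<in> S - {i, j}"
    have e1: "S - {i, l} = S - {l, i}" by auto
    have "\<alpha> (S - {j}) i l (\<alpha> (S - {l}) j i (g l i)) = \<alpha> (S - {i}) j l (g l i)"
      using Cb[rule_format, of S j i l "g l i"] S l ij gm[of l i] by (auto simp add: e1)
    then show "\<alpha> (S - {j}) i l (\<alpha> (S - {l}) j i (g l i)) - \<alpha> (S - {i}) j l (g l i) = 0" by simp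
  qed
  have t4: "T4 S g i j = 0" unfolding T4_def
  proof (rule sum.neutral, rule ballI)
    fix k assume k: "k \<in> S - {i, j}"
    have "\<alpha> (S - {i}) j k (\<alpha> (S - {k}) i j (g j k)) = \<alpha> (S - {j}) i k (g j k)"
      using Cb[rule_format, of S i j k "g j k"] S k ij gm[of j k] by auto
    then show "\<alpha> (S - {j}) i k (g j k) - \<alpha> (S - {i}) j k (\<alpha> (S - {k}) i j (g j k)) = 0" by simp
  qed
  have t5: "T5 S g i j = 0" unfolding T5_def
  proof (rule sum.neutral, rule ballI, rule sum.neutral, rule ballI)
    fix l k assume l: "l \<in> S - {i, j}" and k: "k \<in> S - {i, j} - {l}"
    have e1: "S - {k, l} = S - {l, k}" by auto
    have "\<alpha> (S - {j}) i l (\<alpha> (S - {l}) j k (g l k)) = \<alpha> (S - {i}) j k (\<alpha> (S - {k}) i l (g l k))"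
      using Caa[rule_format, of S j k i l "g l k"] S l k ij gm[of l k] by (auto simp add: e1)
    then show "\<alpha> (S - {j}) i l (\<alpha> (S - {l}) j k (g l k)) - \<alpha> (S - {i}) j k (\<alpha> (S - {k}) i l (g l k)) = 0" by simp
  qed
  show ?thesis unfolding TT_split t1 t2 t3 t4 t5 by simp
qed


lemma nec_b:
  assumes H: "\<forall>S g i j. finite S \<longrightarrow> g \<in> VVM M S \<longrightarrow> i \<in> S \<longrightarrow> j \<in> S \<longrightarrow> i \<noteq> j \<longrightarrow> TT S g i j = 0"
  shows "\<forall>S i j k. finite S \<longrightarrow> i \<in> S \<longrightarrow> j \<in> S \<longrightarrow> k \<in> S \<longrightarrow>
               i \<noteq> j \<longrightarrow> i \<noteq> k \<longrightarrow> j \<noteq> k \<longrightarrow>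
               (\<forall>x\<in>M (S - {j, k}).
                  \<alpha> (S - {i}) j k (\<alpha> (S - {k}) i j x) = \<alpha> (S - {j}) i k x)"
proof (intro allI impI ballI)
  fix S i j k x assume S: "finite S" and ijk: "i \<in> S" "j \<in> S" "k \<in> S" "i \<noteq> j" "i \<noteq> k" "j \<noteq> k"
    and x: "x \<in> M (S - {j, k})"
  define g where "g = (\<lambda>u v. if u = j \<and> v = k then x else (0::'m))"
  have g: "g \<in> VVM M S" unfolding g_def using S ijk x by (intro sg_VVM) auto
  have "TT S g i j = 0" using H S g ijk by blast
  moreover have "T1 S g i j = 0" unfolding T1_def g_def using S ijk by (intro sum.neutral ballI) (clarsimp simp: al0 al0' om0)
  moreover have "T2 S g i j = 0" unfolding T2_def g_def using S ijk by (intro sum.neutral ballI) (clarsimp simp: al0 al0' om0)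
  moreover have "T3 S g i j = 0" unfolding T3_def g_def using S ijk by (intro sum.neutral ballI) (clarsimp simp: al0 al0' om0)
  moreover have "T5 S g i j = 0" unfolding T5_def g_def using S ijk by (intro sum.neutral ballI) (clarsimp simp: al0 al0' om0)
  moreover have "T4 S g i j = \<alpha> (S - {j}) i k x - \<alpha> (S - {i}) j k (\<alpha> (S - {k}) i j x)"
    unfolding T4_def g_def using S ijk by (subst sum_single[where p = k]) (auto simp: al0 al0' om0)
  ultimately show "\<alpha> (S - {i}) j k (\<alpha> (S - {k}) i j x) = \<alpha> (S - {j}) i k x"
    unfolding TT_split by simp
qed


lemma nec_aw:
  assumes H: "\<forall>S g i j. finite S \<longrightarrow> g \<in> VVM M S \<longrightarrow> i \<in> S \<longrightarrow> j \<in> S \<longrightarrow> i \<noteq> j \<longrightarrow> TT S g i j = 0"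
  shows "\<forall>S a b. finite S \<longrightarrow> a \<in> S \<longrightarrow> b \<in> S \<longrightarrow> a \<noteq> b \<longrightarrow>
       (\<forall>x\<in>M (S - {b}). \<omega> (S - {a}) (\<alpha> S a b x) = \<alpha> S a b (\<omega> (S - {b}) x))"
proof (intro allI impI ballI)
  fix S a b x assume S0: "finite S" and ab0: "a \<in> S" "b \<in> S" "a \<noteq> b" and x: "x \<in> M (S - {b})"
  obtain j where j: "j \<notin> S" using fresh[OF S0] by blast
  define S' where "S' = insert j S"
  have S: "finite S'" and ab: "a \<in> S'" "b \<in> S'" "j \<in> S'" "a \<noteq> b" "a \<noteq> j" "b \<noteq> j"
    using S0 ab0 j by (auto simp: S'_def)
  have e0: "S' - {j} = S" and e1: "S' - {b, j} = S - {b}" and e2: "S' - {a, j} = S - {a}"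
    using j by (auto simp: S'_def)
  define g where "g = (\<lambda>u v. if u = b \<and> v = j then x else (0::'m))"
  have g: "g \<in> VVM M S'" unfolding g_def using S ab x e1 by (intro sg_VVM) auto
  have "TT S' g a j = 0" using H S g ab by blast
  moreover have "T1 S' g a j = 0" unfolding T1_def g_def using S ab by (intro sum.neutral ballI) (clarsimp simp: al0 al0' om0)
  moreover have "T3 S' g a j = 0" unfolding T3_def g_def using S ab by (intro sum.neutral ballI) (clarsimp simp: al0 al0' om0)
  moreover have "T4 S' g a j = 0" unfolding T4_def g_def using S ab by (intro sum.neutral ballI) (clarsimp simp: al0 al0' om0)
  moreover have "T5 S' g a j = 0" unfolding T5_def g_def using S ab by (intro sum.neutral ballI) (clarsimp simp: al0 al0' om0)
  moreover have "T2 S' g a j = \<alpha> (S' - {j}) a b (\<omega> (S' - {b, j}) x) - \<omega> (S' - {a, j}) (\<alpha> (S' - {j}) a b x)"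
    unfolding T2_def g_def using S ab by (subst sum_single[where p = b]) (auto simp: al0 al0' om0)
  ultimately have "\<alpha> (S' - {j}) a b (\<omega> (S' - {b, j}) x) - \<omega> (S' - {a, j}) (\<alpha> (S' - {j}) a b x) = 0"
    unfolding TT_split by simp
  then show "\<omega> (S - {a}) (\<alpha> S a b x) = \<alpha> S a b (\<omega> (S - {b}) x)" unfolding e0 e1 e2 by simp
qed

lemma nec_aa:
  assumes H: "\<forall>S g i j. finite S \<longrightarrow> g \<in> VVM M S \<longrightarrow> i \<in> S \<longrightarrow> j \<in> S \<longrightarrow> i \<noteq> j \<longrightarrow> TT S g i j = 0"
  shows "\<forall>S a b c d. finite S \<longrightarrow> a \<in> S \<longrightarrow> b \<in> S \<longrightarrow> c \<in> S \<longrightarrow> d \<in> S \<longrightarrow>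
       a \<noteq> b \<longrightarrow> a \<noteq> c \<longrightarrow> a \<noteq> d \<longrightarrow> b \<noteq> c \<longrightarrow> b \<noteq> d \<longrightarrow> c \<noteq> d \<longrightarrow>
       (\<forall>x\<in>M (S - {b, d}). \<alpha> (S - {a}) c d (\<alpha> (S - {d}) a b x) = \<alpha> (S - {c}) a b (\<alpha> (S - {b}) c d x))"
proof (intro allI impI ballI)
  fix S a b c d x assume S: "finite S" and abcd: "a \<in> S" "b \<in> S" "c \<in> S" "d \<in> S"
    "a \<noteq> b" "a \<noteq> c" "a \<noteq> d" "b \<noteq> c" "b \<noteq> d" "c \<noteq> d" and x: "x \<in> M (S - {b, d})"
  have e: "S - {d, b} = S - {b, d}" by auto
  define g where "g = (\<lambda>u v. if u = d \<and> v = b then x else (0::'m))"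
  have g: "g \<in> VVM M S" unfolding g_def using S abcd x e by (intro sg_VVM) auto
  have "TT S g c a = 0" using H S g abcd by blast
  moreover have "T1 S g c a = 0" unfolding T1_def g_def using S abcd by (intro sum.neutral ballI) (clarsimp simp: al0 al0' om0)
  moreover have "T2 S g c a = 0" unfolding T2_def g_def using S abcd by (intro sum.neutral ballI) (clarsimp simp: al0 al0' om0)
  moreover have "T3 S g c a = 0" unfolding T3_def g_def using S abcd by (intro sum.neutral ballI) (clarsimp simp: al0 al0' om0)
  moreover have "T4 S g c a = 0" unfolding T4_def g_def using S abcd by (intro sum.neutral ballI) (clarsimp simp: al0 al0' om0)
  moreover have "T5 S g c a = \<alpha> (S - {a}) c d (\<alpha> (S - {d}) a b x) - \<alpha> (S - {c}) a b (\<alpha> (S - {b}) c d x)"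
  proof -
    have "T5 S g c a = (\<Sum>k\<in>S - {c, a} - {d}. \<alpha> (S - {a}) c d (\<alpha> (S - {d}) a k (g d k)) - \<alpha> (S - {c}) a k (\<alpha> (S - {k}) c d (g d k)))"
      unfolding T5_def
    proof (rule sum_single)
      show "finite (S - {c, a})" using S by simp
      show "d \<in> S - {c, a}" using abcd by simp
      fix l assume "l \<in> S - {c, a}" "l \<noteq> d"
      then show "(\<Sum>k\<in>S - {c, a} - {l}. \<alpha> (S - {a}) c l (\<alpha> (S - {l}) a k (g l k)) - \<alpha> (S - {c}) a k (\<alpha> (S - {k}) c l (g l k))) = 0"
        unfolding g_def using S abcd by (intro sum.neutral ballI) (clarsimp simp: al0 al0' om0)
    qed
    also have "\<dots> = \<alpha> (S - {a}) c d (\<alpha> (S - {d}) a b x) - \<alpha> (S - {c}) a b (\<alpha> (S - {b}) c d x)"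
      unfolding g_def using S abcd by (subst sum_single[where p = b]) (auto simp: al0 al0' om0)
    finally show ?thesis .
  qed
  ultimately show "\<alpha> (S - {a}) c d (\<alpha> (S - {d}) a b x) = \<alpha> (S - {c}) a b (\<alpha> (S - {b}) c d x)"
    unfolding TT_split by simp
qed

end

lemma oc_ww: "ops_commute M (omega_op \<omega>) omega_dom (omega_op \<omega>) omega_dom"
  unfolding ops_commute_def omega_op_def omega_dom_def by simp

lemma oc_aa: "ops_commute M (alpha_op \<alpha>) alpha_dom (alpha_op \<alpha>) alpha_dom \<longleftrightarrow>
  (\<forall>S a b c d. finite S \<longrightarrow> a \<in> S \<longrightarrow> b \<in> S \<longrightarrow> c \<in> S \<longrightarrow> d \<in> S \<longrightarrow>
       a \<noteq> b \<longrightarrow> a \<noteq> c \<longrightarrow> a \<noteq> d \<longrightarrow> b \<noteq> c \<longrightarrow> b \<noteq> d \<longrightarrow> c \<noteq> d \<longrightarrow>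
       (\<forall>x\<in>M (S - {b, d}). \<alpha> (S - {a}) c d (\<alpha> (S - {d}) a b x) = \<alpha> (S - {c}) a b (\<alpha> (S - {b}) c d x)))"
proof
  assume h: "ops_commute M (alpha_op \<alpha>) alpha_dom (alpha_op \<alpha>) alpha_dom"
  show "\<forall>S a b c d. finite S \<longrightarrow> a \<in> S \<longrightarrow> b \<in> S \<longrightarrow> c \<in> S \<longrightarrow> d \<in> S \<longrightarrow>
       a \<noteq> b \<longrightarrow> a \<noteq> c \<longrightarrow> a \<noteq> d \<longrightarrow> b \<noteq> c \<longrightarrow> b \<noteq> d \<longrightarrow> c \<noteq> d \<longrightarrow>
       (\<forall>x\<in>M (S - {b, d}). \<alpha> (S - {a}) c d (\<alpha> (S - {d}) a b x) = \<alpha> (S - {c}) a b (\<alpha> (S - {b}) c d x))"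
  proof (intro allI impI ballI)
    fix S a b c d x assume S: "finite S" and abcd: "a \<in> S" "b \<in> S" "c \<in> S" "d \<in> S"
      "a \<noteq> b" "a \<noteq> c" "a \<noteq> d" "b \<noteq> c" "b \<noteq> d" "c \<noteq> d" and x: "x \<in> M (S - {b, d})"
    have sub: "{a} \<subseteq> S" "{b} \<subseteq> S" "{c} \<subseteq> S" "{d} \<subseteq> S" using abcd by auto
    have dis: "{a} \<inter> {b} = {}" "{a} \<inter> {c} = {}" "{a} \<inter> {d} = {}" "{b} \<inter> {c} = {}" "{b} \<inter> {d} = {}" "{c} \<inter> {d} = {}"
      using abcd by auto
    have dom: "alpha_dom {a} {b}" "alpha_dom {c} {d}" using abcd unfolding alpha_dom_def by blast+
    have e: "S - ({b} \<union> {d}) = S - {b, d}" by auto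
    have x': "x \<in> M (S - ({b} \<union> {d}))" using x unfolding e .
    have "alpha_op \<alpha> (S - {a}) {c} {d} (alpha_op \<alpha> (S - {d}) {a} {b} x) = alpha_op \<alpha> (S - {c}) {a} {b} (alpha_op \<alpha> (S - {b}) {c} {d} x)"
      by (rule h[unfolded ops_commute_def, rule_format, OF S sub dis dom x'])
    then show "\<alpha> (S - {a}) c d (\<alpha> (S - {d}) a b x) = \<alpha> (S - {c}) a b (\<alpha> (S - {b}) c d x)"
      unfolding alpha_op_def by simp
  qed
next
  assume h: "\<forall>S a b c d. finite S \<longrightarrow> a \<in> S \<longrightarrow> b \<in> S \<longrightarrow> c \<in> S \<longrightarrow> d \<in> S \<longrightarrow>
       a \<noteq> b \<longrightarrow> a \<noteq> c \<longrightarrow> a \<noteq> d \<longrightarrow> b \<noteq> c \<longrightarrow> b \<noteq> d \<longrightarrow> c \<noteq> d \<longrightarrow>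
       (\<forall>x\<in>M (S - {b, d}). \<alpha> (S - {a}) c d (\<alpha> (S - {d}) a b x) = \<alpha> (S - {c}) a b (\<alpha> (S - {b}) c d x))"
  show "ops_commute M (alpha_op \<alpha>) alpha_dom (alpha_op \<alpha>) alpha_dom"
    unfolding ops_commute_def
  proof (intro allI impI ballI)
    fix S A B C D x assume S: "finite S" and sub: "A \<subseteq> S" "B \<subseteq> S" "C \<subseteq> S" "D \<subseteq> S"
      and dis: "A \<inter> B = {}" "A \<inter> C = {}" "A \<inter> D = {}" "B \<inter> C = {}" "B \<inter> D = {}" "C \<inter> D = {}"
      and d1: "alpha_dom A B" and d2: "alpha_dom C D" and x: "x \<in> M (S - (B \<union> D))"
    obtain a b where ab: "A = {a}" "B = {b}" "a \<noteq> b" using d1 unfolding alpha_dom_def by blast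
    obtain c d where cd: "C = {c}" "D = {d}" "c \<noteq> d" using d2 unfolding alpha_dom_def by blast
    have abcd: "a \<in> S" "b \<in> S" "c \<in> S" "d \<in> S"
      "a \<noteq> b" "a \<noteq> c" "a \<noteq> d" "b \<noteq> c" "b \<noteq> d" "c \<noteq> d" using sub dis ab cd by auto
    have e: "S - (B \<union> D) = S - {b, d}" using ab cd by auto
    have x': "x \<in> M (S - {b, d})" using x unfolding e .
    have "\<alpha> (S - {a}) c d (\<alpha> (S - {d}) a b x) = \<alpha> (S - {c}) a b (\<alpha> (S - {b}) c d x)"
      by (rule h[rule_format, OF S abcd x'])
    then show "alpha_op \<alpha> (S - A) C D (alpha_op \<alpha> (S - D) A B x) = alpha_op \<alpha> (S - C) A B (alpha_op \<alpha> (S - B) C D x)"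
      unfolding alpha_op_def ab cd by simp
  qed
qed

lemma oc_aw: "ops_commute M (alpha_op \<alpha>) alpha_dom (omega_op \<omega>) omega_dom \<longleftrightarrow>
  (\<forall>S a b. finite S \<longrightarrow> a \<in> S \<longrightarrow> b \<in> S \<longrightarrow> a \<noteq> b \<longrightarrow>
       (\<forall>x\<in>M (S - {b}). \<omega> (S - {a}) (\<alpha> S a b x) = \<alpha> S a b (\<omega> (S - {b}) x)))"
proof
  assume h: "ops_commute M (alpha_op \<alpha>) alpha_dom (omega_op \<omega>) omega_dom"
  show "\<forall>S a b. finite S \<longrightarrow> a \<in> S \<longrightarrow> b \<in> S \<longrightarrow> a \<noteq> b \<longrightarrow>
       (\<forall>x\<in>M (S - {b}). \<omega> (S - {a}) (\<alpha> S a b x) = \<alpha> S a b (\<omega> (S - {b}) x))"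
  proof (intro allI impI ballI)
    fix S a b x assume S: "finite S" and ab: "a \<in> S" "b \<in> S" "a \<noteq> b" and x: "x \<in> M (S - {b})"
    have sub: "{a} \<subseteq> S" "{b} \<subseteq> S" "{} \<subseteq> S" "{} \<subseteq> S" using ab by auto
    have dis: "{a} \<inter> {b} = {}" "{a} \<inter> {} = {}" "{a} \<inter> {} = {}" "{b} \<inter> {} = {}" "{b} \<inter> {} = {}" "{} \<inter> {} = {}"
      using ab by auto
    have dom: "alpha_dom {a} {b}" "omega_dom {} {}" using ab unfolding alpha_dom_def omega_dom_def by blast+
    have x': "x \<in> M (S - ({b} \<union> {}))" using x by simp
    have "omega_op \<omega> (S - {a}) {} {} (alpha_op \<alpha> (S - {}) {a} {b} x) = alpha_op \<alpha> (S - {}) {a} {b} (omega_op \<omega> (S - {b}) {} {} x)"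
      by (rule h[unfolded ops_commute_def, rule_format, OF S sub dis dom x'])
    then show "\<omega> (S - {a}) (\<alpha> S a b x) = \<alpha> S a b (\<omega> (S - {b}) x)"
      unfolding alpha_op_def omega_op_def by simp
  qed
next
  assume h: "\<forall>S a b. finite S \<longrightarrow> a \<in> S \<longrightarrow> b \<in> S \<longrightarrow> a \<noteq> b \<longrightarrow>
       (\<forall>x\<in>M (S - {b}). \<omega> (S - {a}) (\<alpha> S a b x) = \<alpha> S a b (\<omega> (S - {b}) x))"
  show "ops_commute M (alpha_op \<alpha>) alpha_dom (omega_op \<omega>) omega_dom"
    unfolding ops_commute_def
  proof (intro allI impI ballI)
    fix S A B C D x assume S: "finite S" and sub: "A \<subseteq> S" "B \<subseteq> S" "C \<subseteq> S" "D \<subseteq> S"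
      and dis: "A \<inter> B = {}" "A \<inter> C = {}" "A \<inter> D = {}" "B \<inter> C = {}" "B \<inter> D = {}" "C \<inter> D = {}"
      and d1: "alpha_dom A B" and d2: "omega_dom C D" and x: "x \<in> M (S - (B \<union> D))"
    obtain a b where ab: "A = {a}" "B = {b}" "a \<noteq> b" using d1 unfolding alpha_dom_def by blast
    have cd: "C = {}" "D = {}" using d2 unfolding omega_dom_def by auto
    have ab': "a \<in> S" "b \<in> S" using sub ab by auto
    have x': "x \<in> M (S - {b})" using x ab cd by simp
    have "\<omega> (S - {a}) (\<alpha> S a b x) = \<alpha> S a b (\<omega> (S - {b}) x)"
      by (rule h[rule_format, OF S ab' ab(3) x'])
    then show "omega_op \<omega> (S - A) C D (alpha_op \<alpha> (S - D) A B x) = alpha_op \<alpha> (S - C) A B (omega_op \<omega> (S - B) C D x)"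
      unfolding alpha_op_def omega_op_def ab cd by simp
  qed
qed

theorem proposition4p6:
  fixes scale :: "'k::comm_ring_1 \<Rightarrow> 'm::ab_group_add \<Rightarrow> 'm"
    and M :: "'a set \<Rightarrow> 'm set"
    and act :: "('a \<Rightarrow> 'a) \<Rightarrow> 'a set \<Rightarrow> 'm \<Rightarrow> 'm"
    and a :: "'a set \<Rightarrow> ('a \<Rightarrow> 'm) \<Rightarrow> ('a \<Rightarrow> 'm)"
    and \<omega> :: "'a set \<Rightarrow> 'm \<Rightarrow> 'm"
    and \<alpha> :: "'a set \<Rightarrow> 'a \<Rightarrow> 'a \<Rightarrow> 'm \<Rightarrow> 'm"
  assumes "infinite (UNIV :: 'a set)"
    and "FB_module scale M act"
    and "FB_map_VM scale M act a"
    and "\<forall>S j x. finite S \<longrightarrow> j \<in> S \<longrightarrow> x \<in> M (S - {j}) \<longrightarrow>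
           a S (tVM j x) =
             (\<lambda>i. if i = j then \<omega> (S - {j}) x else if i \<in> S then \<alpha> S i j x else 0)"
  shows "gl_rep M a \<longleftrightarrow>
           ((ops_commute M (alpha_op \<alpha>) alpha_dom (alpha_op \<alpha>) alpha_dom \<and>
             ops_commute M (omega_op \<omega>) omega_dom (omega_op \<omega>) omega_dom \<and>
             ops_commute M (alpha_op \<alpha>) alpha_dom (omega_op \<omega>) omega_dom) \<and>
            (\<forall>S i j k. finite S \<longrightarrow> i \<in> S \<longrightarrow> j \<in> S \<longrightarrow> k \<in> S \<longrightarrow>
               i \<noteq> j \<longrightarrow> i \<noteq> k \<longrightarrow> j \<noteq> k \<longrightarrow>
               (\<forall>x\<in>M (S - {j, k}).
                  \<alpha> (S - {i}) j k (\<alpha> (S - {k}) i j x) = \<alpha> (S - {j}) i k x)))"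
proof -
  interpret P46 scale M act a \<omega> \<alpha> by (rule P46.intro) (rule assms)+
  show ?thesis
    unfolding glrep_iff oc_aa oc_aw
    apply (rule iffI)
     apply (intro conjI)
        apply (erule nec_aa)
       apply (rule oc_ww)
      apply (erule nec_aw)
     apply (erule nec_b)
    apply (elim conjE)
    apply (intro allI impI)
    apply (rule suff; assumption)
    done
qed

end
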